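(* In the motivic Steenrod algebra (over an algebraically closed field of characteristic 0), let $P^RP^S=\sum_X\tau^{u(X)}b(X)P^{T(X)}$ be the Milnor product formula. If for a Milnor matrix $X$ one has $b(X)=1$ and $v(T(X))=v(R)+v(S)$, then $u(X)=0$.
   Context: $\mathbb{M}_2=\mathbb{F}_2[\tau]$, $\tau$ of bidegree $(0,1)$. The Milnor basis of the motivic Steenrod algebra $A$ over $\mathbb{M}_2$ consists of $P^R$ for finite sequences $R=(r_1,r_2,\dots)$ of nonnegative integers, with $P^R$ of bidegree $\big(\sum r_i(2^i-1),\sum\lfloor r_i(2^i-1)/2\rfloor\big)$. The Milnor product formula: $X=(x_{ij})_{i,j\ge0}$ ranges over matrices of nonnegative integers ($x_{00}$ ignored) with $\sum_j2^jx_{ij}=r_i$ for $i\ge1$ and $\sum_ix_{ij}=s_j$ for $j\ge1$; $T(X)=(t_1,t_2,\dots)$ with $t_n=\sum_{i+j=n}x_{ij}$; $b(X)\in\mathbb{F}_2$ is the product over $n$ of the multinomial coefficients $t_n!/\prod_{i+j=n}x_{ij}!$ mod 2; and $u(X)\ge0$ is the integer forced by homogeneity, namely $u(X)=C(P^R)+C(P^S)-C(P^{T(X)})$, where the Chow weight of an element of bidegree $(p,q)$ is $C=2q-p$. For $R=(r_1,r_2,\dots)$ with 2-adic expansions $r_i=\sum_ka_{ik}2^k$, set $v(R)=\sum_{i,k}i\,a_{ik}$. *)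

theory Defs
  imports Main
begin

text \<open>Milnor sequences R = (r_1, r_2, ...) are represented as functions nat => nat;
  the value at index 0 is ignored everywhere. They are required to have finite support.\<close>

definition fin_seq :: "(nat \<Rightarrow> nat) \<Rightarrow> bool" where
  "fin_seq R \<longleftrightarrow> finite {i. 1 \<le> i \<and> R i \<noteq> 0}"

text \<open>First (topological) and second (weight) degree of P^R.\<close>
definition deg_p :: "(nat \<Rightarrow> nat) \<Rightarrow> nat" where
  "deg_p R = (\<Sum>i\<in>{i. 1 \<le> i \<and> R i \<noteq> 0}. R i * (2 ^ i - 1))"

definition deg_q :: "(nat \<Rightarrow> nat) \<Rightarrow> nat" where
  "deg_q R = (\<Sum>i\<in>{i. 1 \<le> i \<and> R i \<noteq> 0}. (R i * (2 ^ i - 1)) div 2)"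

definition chow :: "(nat \<Rightarrow> nat) \<Rightarrow> int" where
  "chow R = 2 * int (deg_q R) - int (deg_p R)"

text \<open>Milnor matrices X = (x_ij); the entry x_00 is ignored.\<close>
definition fin_matrix :: "(nat \<Rightarrow> nat \<Rightarrow> nat) \<Rightarrow> bool" where
  "fin_matrix X \<longleftrightarrow> finite {(i, j). (i, j) \<noteq> (0, 0) \<and> X i j \<noteq> 0}"

definition milnor_matrix :: "(nat \<Rightarrow> nat) \<Rightarrow> (nat \<Rightarrow> nat) \<Rightarrow> (nat \<Rightarrow> nat \<Rightarrow> nat) \<Rightarrow> bool" where
  "milnor_matrix R S X \<longleftrightarrow> fin_matrix X
     \<and> (\<forall>i\<ge>1. (\<Sum>j\<in>{j. X i j \<noteq> 0}. 2 ^ j * X i j) = R i)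
     \<and> (\<forall>j\<ge>1. (\<Sum>i\<in>{i. X i j \<noteq> 0}. X i j) = S j)"

definition T_seq :: "(nat \<Rightarrow> nat \<Rightarrow> nat) \<Rightarrow> nat \<Rightarrow> nat" where
  "T_seq X n = (if n = 0 then 0 else (\<Sum>i\<le>n. X i (n - i)))"

text \<open>b(X): product over n of the multinomial coefficients t_n! / prod_{i+j=n} x_ij!, mod 2
  (factors with t_n = 0 are 1, so only the finitely many n with t_n nonzero are taken).\<close>
definition multinom_n :: "(nat \<Rightarrow> nat \<Rightarrow> nat) \<Rightarrow> nat \<Rightarrow> nat" where
  "multinom_n X n = fact (T_seq X n) div (\<Prod>i\<le>n. fact (X i (n - i)))"

definition b_coeff :: "(nat \<Rightarrow> nat \<Rightarrow> nat) \<Rightarrow> nat" where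
  "b_coeff X = (\<Prod>n\<in>{n. 1 \<le> n \<and> T_seq X n \<noteq> 0}. multinom_n X n) mod 2"

definition u_exp :: "(nat \<Rightarrow> nat) \<Rightarrow> (nat \<Rightarrow> nat) \<Rightarrow> (nat \<Rightarrow> nat \<Rightarrow> nat) \<Rightarrow> int" where
  "u_exp R S X = chow R + chow S - chow (T_seq X)"

text \<open>v(R) = sum_{i,k} i * a_ik where r_i = sum_k a_ik 2^k (bits a_ik; bits with k > r_i vanish).\<close>
definition v_val :: "(nat \<Rightarrow> nat) \<Rightarrow> nat" where
  "v_val R = (\<Sum>i\<in>{i. 1 \<le> i \<and> R i \<noteq> 0}. \<Sum>k\<le>R i. i * ((R i div 2 ^ k) mod 2))"

end

theory Submission
  imports Defs "HOL-Computational_Algebra.Primes" "HOL-Library.Infinite_Set"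
begin

fun pop :: "nat \<Rightarrow> nat" where
  "pop n = (if n = 0 then 0 else n mod 2 + pop (n div 2))"

declare pop.simps[simp del]

lemma pop_rec: "pop n = n mod 2 + pop (n div 2)"
  by (cases "n = 0") (simp_all add: pop.simps[of n] pop.simps[of 0])

lemma pop_0[simp]: "pop 0 = 0"
  by (simp add: pop.simps)

lemma pop_double[simp]: "pop (2 * n) = pop n"
  by (subst pop_rec) simp

lemma pop_pow2: "pop (2 ^ j * x) = pop x"
  by (induction j) (simp_all add: mult.assoc)

lemma pop_le: "pop n \<le> n"
proof (induction n rule: less_induct)
  case (less n)
  show ?case
  proof (cases "n = 0")
    case False
    then have "pop (n div 2) \<le> n div 2" using less by simp
    then show ?thesis by (subst pop_rec) linarith
  qed simp
qed

lemma pop_add: "pop (a + b) \<le> pop a + pop b"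
proof (induction "a + b" arbitrary: a b rule: less_induct)
  case less
  show ?case
  proof (cases "odd a \<and> odd b")
    case True
    let ?c = "a div 2 + b div 2"
    have ab: "a + b = 2 * (?c + 1)" using True by (auto elim!: oddE)
    have pos: "a + b \<ge> 2" using True by (auto elim!: oddE)
    have h1: "pop (?c + 1) \<le> pop ?c + pop 1"
      using less[of ?c 1] pos ab by simp
    have h2: "pop ?c \<le> pop (a div 2) + pop (b div 2)"
      using less[of "a div 2" "b div 2"] pos by simp
    have p1: "pop 1 = 1" by (subst pop_rec) simp
    have "pop (a + b) = pop (?c + 1)" by (simp only: ab pop_double)
    moreover have "pop a = 1 + pop (a div 2)" "pop b = 1 + pop (b div 2)"
      using True by (subst pop_rec, simp add: odd_iff_mod_2_eq_one)+
    ultimately show ?thesis using h1 h2 p1 by linarith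
  next
    case False
    then have m: "(a + b) mod 2 = a mod 2 + b mod 2" "(a + b) div 2 = a div 2 + b div 2"
      by (auto elim!: evenE oddE)
    show ?thesis
    proof (cases "a + b = 0")
      case False
      then have "a div 2 + b div 2 < a + b" by linarith
      then have "pop (a div 2 + b div 2) \<le> pop (a div 2) + pop (b div 2)"
        using less[of "a div 2" "b div 2"] by simp
      then show ?thesis
        by (subst pop_rec, subst (2) pop_rec, subst (3) pop_rec) (simp add: m)
    qed simp
  qed
qed

lemma pop_add_odd: assumes "odd a" "odd b" shows "pop (a + b) < pop a + pop b"
proof -
  let ?c = "a div 2 + b div 2"
  have ab: "a + b = 2 * (?c + 1)" using assms by (auto elim!: oddE)
  have p1: "pop 1 = 1" by (subst pop_rec) simp
  have "pop (a + b) = pop (?c + 1)" by (simp only: ab pop_double)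
  also have "\<dots> \<le> pop ?c + 1" using pop_add[of ?c 1] p1 by simp
  also have "\<dots> \<le> pop (a div 2) + pop (b div 2) + 1" using pop_add by simp
  finally show ?thesis
    using assms by (subst pop_rec, subst (2) pop_rec) (simp add: odd_iff_mod_2_eq_one)
qed

lemma pop_sum: "pop (\<Sum>k\<in>A. f k) \<le> (\<Sum>k\<in>A. pop (f k))"
proof (induction A rule: infinite_finite_induct)
  case (insert a F)
  then show ?case using pop_add[of "f a" "sum f F"] by simp
qed simp_all

lemma pop_sum_parity:
  assumes "finite A" "pop (\<Sum>k\<in>A. f k) = (\<Sum>k\<in>A. pop (f k))"
  shows "(\<Sum>k\<in>A. f k) mod 2 = (\<Sum>k\<in>A. f k mod 2)"
  using assms
proof (induction A rule: finite_induct)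
  case (insert a F)
  let ?s = "sum f F"
  have e: "pop (f a + ?s) = pop (f a) + (\<Sum>k\<in>F. pop (f k))" using insert by simp
  have "pop (f a + ?s) \<le> pop (f a) + pop ?s" by (rule pop_add)
  moreover have "pop ?s \<le> (\<Sum>k\<in>F. pop (f k))" by (rule pop_sum)
  ultimately have e2: "pop ?s = (\<Sum>k\<in>F. pop (f k))" "pop (f a + ?s) = pop (f a) + pop ?s"
    using e by linarith+
  have IH: "?s mod 2 = (\<Sum>k\<in>F. f k mod 2)" using insert e2 by simp
  have "\<not> (odd (f a) \<and> odd ?s)" using pop_add_odd[of "f a" ?s] e2 by auto
  then have "(f a + ?s) mod 2 = f a mod 2 + ?s mod 2" by (auto elim!: evenE oddE)
  then show ?case using insert IH by simp
qed simp

lemma bits_sum: "m < 2 ^ N \<Longrightarrow> (\<Sum>k<N. m div 2 ^ k mod 2) = pop m"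
proof (induction N arbitrary: m)
  case 0 then show ?case by simp
next
  case (Suc N)
  have "m div 2 < 2 ^ N" using Suc.prems by simp
  then have IH: "(\<Sum>k<N. m div 2 div 2 ^ k mod 2) = pop (m div 2)" using Suc.IH by simp
  have "(\<Sum>k<Suc N. m div 2 ^ k mod 2) = m mod 2 + (\<Sum>k<N. m div 2 ^ Suc k mod 2)"
    by (subst sum.lessThan_Suc_shift) simp
  also have "\<dots> = m mod 2 + (\<Sum>k<N. m div 2 div 2 ^ k mod 2)"
    by (simp add: div_mult2_eq)
  finally show ?case using IH by (simp add: pop_rec[of m])
qed

lemma bits_sum_atMost: "(\<Sum>k\<le>m. m div 2 ^ k mod 2) = pop m"
proof -
  have "m < 2 ^ Suc m" using less_exp[of "Suc m"] by simp
  then show ?thesis using bits_sum[of m "Suc m"] by (simp add: lessThan_Suc_atMost)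
qed

lemma pop_suc_dec:
  "pop (Suc n) \<le> pop n + 1 \<and> (\<exists>k. odd k \<and> Suc n = 2 ^ (pop n + 1 - pop (Suc n)) * k)"
proof (induction n rule: less_induct)
  case (less n)
  show ?case
  proof (cases "even n")
    case True
    have "pop (Suc n) = 1 + pop n"
      using True by (subst pop_rec, subst (2) pop_rec) (auto elim!: evenE)
    then show ?thesis using True by auto
  next
    case False
    then obtain m where n: "n = 2 * m + 1" by (auto elim!: oddE)
    have "m < n" using n by simp
    from less[OF this] obtain k where k: "odd k" "Suc m = 2 ^ (pop m + 1 - pop (Suc m)) * k"
      and le: "pop (Suc m) \<le> pop m + 1" by blast
    have ps: "pop (Suc n) = pop (Suc m)"
      using n pop_double[of "Suc m"] by (simp add: algebra_simps)
    have pn: "pop n = 1 + pop m"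
      using n by (subst pop_rec) simp
    have e: "pop n + 1 - pop (Suc n) = Suc (pop m + 1 - pop (Suc m))"
      using le ps pn by simp
    have "Suc n = 2 * Suc m" using n by simp
    also have "\<dots> = 2 * (2 ^ (pop m + 1 - pop (Suc m)) * k)" using k(2) by simp
    also have "\<dots> = 2 ^ (pop n + 1 - pop (Suc n)) * k"
      by (simp only: e power_Suc mult.assoc)
    finally show ?thesis using k le ps pn by auto
  qed
qed

lemma mult2_pow_odd: "odd k \<Longrightarrow> multiplicity (2::nat) (2 ^ e * k) = e"
proof -
  assume "odd k"
  then have "k \<noteq> 0" by (metis even_zero)
  moreover have "multiplicity (2::nat) k = 0" using \<open>odd k\<close>
    by (intro not_dvd_imp_multiplicity_0) simp
  ultimately show ?thesis
    by (simp add: prime_elem_multiplicity_mult_distrib)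
qed

lemma mult_fact: "multiplicity (2::nat) (fact n) = n - pop n"
proof (induction n)
  case 0 then show ?case by simp
next
  case (Suc n)
  obtain k where k: "odd k" "Suc n = 2 ^ (pop n + 1 - pop (Suc n)) * k"
    and le: "pop (Suc n) \<le> pop n + 1" using pop_suc_dec by blast
  have "multiplicity (2::nat) (fact (Suc n)) = multiplicity 2 (Suc n) + multiplicity 2 (fact n :: nat)"
    by (simp only: fact_Suc[of n] of_nat_id, rule prime_elem_multiplicity_mult_distrib) auto
  also have "multiplicity (2::nat) (Suc n) = pop n + 1 - pop (Suc n)"
    using mult2_pow_odd[OF k(1)] k(2) by metis
  finally show ?case using Suc.IH le pop_le[of n] by simp
qed

lemma fact_prod_dvd:
  assumes "finite A" shows "(\<Prod>i\<in>A. fact (f i)) dvd (fact (\<Sum>i\<in>A. f i) :: nat)"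
  using assms
proof (induction A rule: finite_induct)
  case (insert a F)
  let ?s = "sum f F"
  have "fact (f a) * fact ?s * ((f a + ?s) choose f a) = (fact (f a + ?s) :: nat)"
    using binomial_fact_lemma[of "f a" "f a + ?s"] by simp
  then have "fact (f a) * fact ?s dvd (fact (f a + ?s) :: nat)"
    by (metis dvd_triv_left)
  moreover have "fact (f a) * (\<Prod>i\<in>F. fact (f i)) dvd (fact (f a) * fact ?s :: nat)"
    using insert by (simp add: mult_dvd_mono)
  ultimately show ?case using insert by (auto intro: dvd_trans)
qed simp

lemma multinom_pop:
  assumes "finite A" "odd (fact (\<Sum>i\<in>A. f i) div (\<Prod>i\<in>A. fact (f i)) :: nat)"
  shows "pop (\<Sum>i\<in>A. f i) = (\<Sum>i\<in>A. pop (f i))"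
proof -
  let ?t = "\<Sum>i\<in>A. f i" and ?D = "(\<Prod>i\<in>A. fact (f i)) :: nat"
  let ?M = "fact ?t div ?D"
  have eq: "fact ?t = ?M * ?D" using fact_prod_dvd[OF assms(1), of f] by simp
  have D0: "?D \<noteq> 0" by (simp add: assms(1))
  have M0: "?M \<noteq> 0" using assms(2) by (metis even_zero)
  have "multiplicity (2::nat) (fact ?t) = multiplicity 2 ?M + multiplicity 2 ?D"
    using D0 M0 by (subst eq, intro prime_elem_multiplicity_mult_distrib) auto
  also have "multiplicity (2::nat) ?M = 0"
    using assms(2) by (intro not_dvd_imp_multiplicity_0) simp
  also have "multiplicity (2::nat) ?D = (\<Sum>i\<in>A. multiplicity 2 (fact (f i) :: nat))"
    using assms(1) by (intro prime_elem_multiplicity_prod_distrib) auto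
  finally have "?t - pop ?t = (\<Sum>i\<in>A. f i - pop (f i))" by (simp add: mult_fact)
  also have "\<dots> = ?t - (\<Sum>i\<in>A. pop (f i))"
    using pop_le by (simp add: sum_subtractf_nat)
  finally have "?t - pop ?t = ?t - (\<Sum>i\<in>A. pop (f i))" .
  moreover have "(\<Sum>i\<in>A. pop (f i)) \<le> ?t" using pop_le by (simp add: sum_mono)
  moreover have "pop ?t \<le> ?t" by (rule pop_le)
  ultimately show ?thesis by linarith
qed

lemma supp_sum:
  fixes F g :: "nat \<Rightarrow> nat" and M :: nat
  assumes "\<forall>i\<ge>M. F i = 0" "\<forall>i. F i = 0 \<longrightarrow> g i = 0"
  shows "(\<Sum>i\<in>{i. 1 \<le> i \<and> F i \<noteq> 0}. g i) = (\<Sum>i\<in>{1..<M}. (g i :: nat))"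
proof (rule sum.mono_neutral_left)
  show "{i. 1 \<le> i \<and> F i \<noteq> 0} \<subseteq> {1..<M}"
  proof
    fix x assume x: "x \<in> {i. 1 \<le> i \<and> F i \<noteq> 0}"
    have "x < M"
    proof (rule ccontr)
      assume "\<not> x < M"
      then have "M \<le> x" by simp
      then show False using assms(1) x by auto
    qed
    then show "x \<in> {1..<M}" using x by simp
  qed
qed (use assms(2) in auto)

lemma zero_split: "1 \<le> (N::nat) \<Longrightarrow> (\<Sum>i<N. g i) = g 0 + (\<Sum>i\<in>{1..<N}. g i)"
proof -
  assume "1 \<le> N"
  then have "{..<N} = insert 0 {1..<N}" by auto
  then show ?thesis by simp
qed

lemma mod2_odd_factor: "1 \<le> i \<Longrightarrow> (r * (2 ^ i - 1)) mod 2 = (r::nat) mod 2"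
proof -
  assume "1 \<le> i"
  then have "odd ((2::nat) ^ i - 1)"
    by (cases i) (simp_all add: odd_iff_mod_2_eq_one)
  then show ?thesis
    by (metis mod_mult_right_eq mult.right_neutral odd_iff_mod_2_eq_one)
qed

lemma chow_eq: "chow R = - int (\<Sum>i\<in>{i. 1 \<le> i \<and> R i \<noteq> 0}. R i mod 2)"
proof -
  let ?A = "{i. 1 \<le> i \<and> R i \<noteq> 0}"
  have "deg_p R = (\<Sum>i\<in>?A. 2 * ((R i * (2 ^ i - 1)) div 2) + R i mod 2)"
    unfolding deg_p_def
  proof (rule sum.cong)
    fix i assume "i \<in> ?A"
    then have i1: "1 \<le> i" by simp
    show "R i * (2 ^ i - 1) = 2 * ((R i * (2 ^ i - 1)) div 2) + R i mod 2"
      using mod2_odd_factor[OF i1, of "R i"] mult_div_mod_eq[of 2 "R i * (2^i-1)"] by (simp only:)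
  qed simp
  also have "\<dots> = 2 * deg_q R + (\<Sum>i\<in>?A. R i mod 2)"
    unfolding deg_q_def by (simp add: sum.distrib sum_distrib_left)
  finally show ?thesis unfolding chow_def by simp
qed

lemma vval_eq: "v_val R = (\<Sum>i\<in>{i. 1 \<le> i \<and> R i \<noteq> 0}. i * pop (R i))"
  unfolding v_val_def by (simp add: sum_distrib_left[symmetric] bits_sum_atMost)

lemma sum_eq_le:
  assumes "finite A" "\<forall>k\<in>A. a k \<le> (b k :: nat)" "sum a A = sum b A" "k \<in> A"
  shows "a k = b k"
proof (rule ccontr)
  assume "a k \<noteq> b k"
  then have "a k < b k" using assms by force
  then have "sum a A < sum b A" using assms by (intro sum_strict_mono_ex1) auto
  then show False using assms by simp
qed

lemma tri_box:
  fixes N :: nat and g :: "nat \<Rightarrow> nat \<Rightarrow> nat"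
  assumes "\<forall>i j. (N \<le> i \<or> N \<le> j) \<longrightarrow> g i j = (0::nat)"
  shows "(\<Sum>k<2*N. \<Sum>i\<le>k. g i (k-i)) = (\<Sum>i<N. \<Sum>j<N. g i j)"
proof -
  have "(\<Sum>k<2*N. \<Sum>i\<le>k. g i (k-i)) = (\<Sum>(i,j)\<in>{(i,j). i+j < 2*N}. g i j)"
    by (rule sum.triangle_reindex[symmetric])
  also have "\<dots> = (\<Sum>(i,j)\<in>{..<N}\<times>{..<N}. g i j)"
  proof (rule sum.mono_neutral_right)
    show "finite {(i, j). i + j < 2 * N}"
      by (rule finite_subset[of _ "{..<2*N}\<times>{..<2*N}"]) auto
    show "{..<N} \<times> {..<N} \<subseteq> {(i, j). i + j < 2 * N}" by auto
    show "\<forall>x\<in>{(i, j). i + j < 2 * N} - {..<N} \<times> {..<N}. (case x of (i, j) \<Rightarrow> g i j) = 0"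
    proof
      fix x assume x: "x \<in> {(i, j). i + j < 2 * N} - {..<N} \<times> {..<N}"
      obtain i j where ij: "x = (i, j)" by fastforce
      then have "N \<le> i \<or> N \<le> j" using x by auto
      then show "(case x of (i, j) \<Rightarrow> g i j) = 0" using assms ij by auto
    qed
  qed
  also have "\<dots> = (\<Sum>i<N. \<Sum>j<N. g i j)"
    by (rule sum.cartesian_product[symmetric])
  finally show ?thesis .
qed

theorem mainTheorem7:
  fixes R S :: "nat \<Rightarrow> nat" and X :: "nat \<Rightarrow> nat \<Rightarrow> nat"
  assumes "fin_seq R" and "fin_seq S"
    and "milnor_matrix R S X"
    and "b_coeff X = 1"
    and "v_val (T_seq X) = v_val R + v_val S"
  shows "u_exp R S X = 0"
proof -
  let ?T = "T_seq X"
  have finX: "fin_matrix X" and rowX: "\<forall>i\<ge>1. (\<Sum>j\<in>{j. X i j \<noteq> 0}. 2 ^ j * X i j) = R i"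
    and colX: "\<forall>j\<ge>1. (\<Sum>i\<in>{i. X i j \<noteq> 0}. X i j) = S j"
    using assms(3) unfolding milnor_matrix_def by auto
  let ?F = "{(i, j). (i, j) \<noteq> (0::nat, 0::nat) \<and> X i j \<noteq> 0}"
  have "finite ?F" using finX unfolding fin_matrix_def by simp
  then have "finite (fst ` ?F \<union> snd ` ?F)" by simp
  then obtain N0 where N0: "fst ` ?F \<union> snd ` ?F \<subseteq> {..<N0}"
    using finite_nat_bounded by blast
  have bd0: "i < N0 \<and> j < N0" if h: "(i, j) \<noteq> (0, 0)" "X i j \<noteq> 0" for i j
  proof -
    have m: "(i, j) \<in> ?F" unfolding mem_Collect_eq case_prod_conv using h by blast
    have "i \<in> fst ` ?F" by (rule rev_image_eqI[OF m]) simp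
    moreover have "j \<in> snd ` ?F" by (rule rev_image_eqI[OF m]) simp
    ultimately show ?thesis using N0 by blast
  qed
  define N where "N = max 1 N0"
  have N1: "1 \<le> N" unfolding N_def by simp
  have bd: "i < N \<and> j < N" if "(i, j) \<noteq> (0, 0)" "X i j \<noteq> 0" for i j
    using bd0[OF that] unfolding N_def by auto
  have out: "X i j = 0" if "(i, j) \<noteq> (0, 0)" "N \<le> i \<or> N \<le> j" for i j
  proof (rule ccontr)
    assume "X i j \<noteq> 0"
    then have "i < N \<and> j < N" using bd that(1) by blast
    then show False using that(2) by simp
  qed

  have Rrow: "R i = (\<Sum>j<N. 2 ^ j * X i j)" if "1 \<le> i" for i
  proof -
    have "R i = (\<Sum>j\<in>{j. X i j \<noteq> 0}. 2 ^ j * X i j)" using rowX that by simp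
    also have "\<dots> = (\<Sum>j<N. 2 ^ j * X i j)"
    proof (rule sum.mono_neutral_left)
      show "{j. X i j \<noteq> 0} \<subseteq> {..<N}"
      proof
        fix x assume "x \<in> {j. X i j \<noteq> 0}"
        moreover have "(i, x) \<noteq> (0, 0)" using that by simp
        ultimately show "x \<in> {..<N}" using bd[of i x] by simp
      qed
    qed auto
    finally show ?thesis .
  qed
  have RN: "\<forall>i\<ge>N. R i = 0"
  proof (intro allI impI)
    fix i assume "N \<le> i"
    then have "1 \<le> i" using N1 by simp
    moreover have "\<forall>j. X i j = 0" using out \<open>1 \<le> i\<close> \<open>N \<le> i\<close> by auto
    ultimately show "R i = 0" using Rrow by simp
  qed
  have Scol: "S j = (\<Sum>i<N. X i j)" if "1 \<le> j" for j
  proof -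
    have "S j = (\<Sum>i\<in>{i. X i j \<noteq> 0}. X i j)" using colX that by simp
    also have "\<dots> = (\<Sum>i<N. X i j)"
    proof (rule sum.mono_neutral_left)
      show "{i. X i j \<noteq> 0} \<subseteq> {..<N}"
      proof
        fix x assume "x \<in> {i. X i j \<noteq> 0}"
        moreover have "(x, j) \<noteq> (0, 0)" using that by simp
        ultimately show "x \<in> {..<N}" using bd[of x j] by simp
      qed
    qed auto
    finally show ?thesis .
  qed
  have SN: "\<forall>j\<ge>N. S j = 0"
  proof (intro allI impI)
    fix j assume "N \<le> j"
    then have "1 \<le> j" using N1 by simp
    moreover have "\<forall>i. X i j = 0" using out \<open>1 \<le> j\<close> \<open>N \<le> j\<close> by auto
    ultimately show "S j = 0" using Scol by simp
  qed
  have Tdef: "?T n = (\<Sum>i\<le>n. X i (n - i))" if "1 \<le> n" for n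
    using that unfolding T_seq_def by simp
  have TN: "\<forall>n\<ge>2*N. ?T n = 0"
  proof (intro allI impI)
    fix n assume n: "2 * N \<le> n"
    have "X i (n - i) = 0" if "i \<le> n" for i
    proof (rule out)
      show "(i, n - i) \<noteq> (0, 0)" using n N1 that by auto
      show "N \<le> i \<or> N \<le> n - i" using n that by auto
    qed
    then show "?T n = 0" using Tdef[of n] n N1 by simp
  qed

  have Tpop: "pop (?T n) = (\<Sum>i\<le>n. pop (X i (n - i)))" if n1: "1 \<le> n" for n
  proof (cases "?T n = 0")
    case True
    have z: "(\<Sum>i\<le>n. X i (n - i)) = 0" using True Tdef[OF n1] by simp
    have "\<forall>i\<in>{..n}. X i (n - i) = 0" using z by simp
    then have "(\<Sum>i\<le>n. pop (X i (n - i))) = 0" by simp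
    then show ?thesis using True by simp
  next
    case False
    let ?B = "{n. 1 \<le> n \<and> ?T n \<noteq> 0}"
    have sub: "?B \<subseteq> {..<2*N}"
    proof
      fix m assume m: "m \<in> ?B"
      show "m \<in> {..<2*N}"
      proof (rule ccontr)
        assume "m \<notin> {..<2*N}"
        then have "2 * N \<le> m" by simp
        then have "?T m = 0" using TN by blast
        then show False using m by simp
      qed
    qed
    have finB: "finite ?B" using sub finite_subset by blast
    have nB: "n \<in> ?B" using False n1 by simp
    have "(\<Prod>m\<in>?B. multinom_n X m) mod 2 = 1" using assms(4) unfolding b_coeff_def .
    then have oddP: "\<not> 2 dvd (\<Prod>m\<in>?B. multinom_n X m)" by presburger
    have dv: "multinom_n X n dvd (\<Prod>m\<in>?B. multinom_n X m)"
      using finB nB by (rule dvd_prodI)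
    have "\<not> 2 dvd multinom_n X n"
    proof
      assume "2 dvd multinom_n X n"
      then have "2 dvd (\<Prod>m\<in>?B. multinom_n X m)" using dv by (rule dvd_trans)
      then show False using oddP by contradiction
    qed
    then have "odd (fact (\<Sum>i\<le>n. X i (n - i)) div (\<Prod>i\<le>n. fact (X i (n - i))) :: nat)"
      unfolding multinom_n_def Tdef[OF n1] by simp
    from multinom_pop[OF _ this] show ?thesis unfolding Tdef[OF n1] by simp
  qed

  let ?p = "\<lambda>i j. pop (X i j)"
  have vR: "v_val R = (\<Sum>i<N. i * pop (R i))"
    using vval_eq[of R] supp_sum[of N R "\<lambda>i. i * pop (R i)"] RN zero_split[OF N1, of "\<lambda>i. i * pop (R i)"]
    by simp
  have vS: "v_val S = (\<Sum>j<N. j * pop (S j))"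
    using vval_eq[of S] supp_sum[of N S "\<lambda>i. i * pop (S i)"] SN zero_split[OF N1, of "\<lambda>i. i * pop (S i)"]
    by simp
  have N2: "1 \<le> 2 * N" using N1 by simp
  have vT: "v_val ?T = (\<Sum>n<2*N. \<Sum>i\<le>n. (i + (n - i)) * ?p i (n - i))"
  proof -
    have "v_val ?T = (\<Sum>n\<in>{1..<2*N}. n * pop (?T n))"
      using vval_eq[of ?T] supp_sum[of "2*N" ?T "\<lambda>i. i * pop (?T i)"] TN by simp
    also have "\<dots> = (\<Sum>n\<in>{1..<2*N}. \<Sum>i\<le>n. (i + (n - i)) * ?p i (n - i))"
    proof (rule sum.cong)
      fix n assume "n \<in> {1..<2*N}"
      then have "1 \<le> n" by simp
      then have "n * pop (?T n) = (\<Sum>i\<le>n. n * ?p i (n - i))"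
        using Tpop by (simp add: sum_distrib_left)
      also have "\<dots> = (\<Sum>i\<le>n. (i + (n - i)) * ?p i (n - i))"
        by (rule sum.cong) auto
      finally show "n * pop (?T n) = (\<Sum>i\<le>n. (i + (n - i)) * ?p i (n - i))" .
    qed simp
    also have "\<dots> = (\<Sum>n<2*N. \<Sum>i\<le>n. (i + (n - i)) * ?p i (n - i))"
      using zero_split[OF N2, of "\<lambda>n. \<Sum>i\<le>n. (i + (n - i)) * ?p i (n - i)"] by simp
    finally show ?thesis .
  qed
  have W: "(\<Sum>n<2*N. \<Sum>i\<le>n. (i + (n - i)) * ?p i (n - i))
      = (\<Sum>i<N. i * (\<Sum>j<N. ?p i j)) + (\<Sum>j<N. j * (\<Sum>i<N. ?p i j))"
  proof -
    have "(\<Sum>n<2*N. \<Sum>i\<le>n. (i + (n - i)) * ?p i (n - i)) = (\<Sum>i<N. \<Sum>j<N. (i + j) * ?p i j)"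
    proof (rule tri_box[of N "\<lambda>i j. (i + j) * ?p i j"])
      show "\<forall>i j. N \<le> i \<or> N \<le> j \<longrightarrow> (i + j) * pop (X i j) = 0"
      proof (intro allI impI)
        fix i j assume h: "N \<le> i \<or> N \<le> j"
        show "(i + j) * pop (X i j) = 0"
        proof (cases "(i, j) = (0, 0)")
          case False then show ?thesis using out h by simp
        qed simp
      qed
    qed
    also have "\<dots> = (\<Sum>i<N. \<Sum>j<N. i * ?p i j) + (\<Sum>i<N. \<Sum>j<N. j * ?p i j)"
      by (simp add: sum.distrib algebra_simps)
    also have "(\<Sum>i<N. \<Sum>j<N. j * ?p i j) = (\<Sum>j<N. \<Sum>i<N. j * ?p i j)"
      by (rule sum.swap)
    finally show ?thesis by (simp add: sum_distrib_left)
  qed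
  have leR: "\<forall>i\<in>{..<N}. i * pop (R i) \<le> i * (\<Sum>j<N. ?p i j)"
  proof
    fix i assume "i \<in> {..<N}"
    show "i * pop (R i) \<le> i * (\<Sum>j<N. ?p i j)"
    proof (cases "i = 0")
      case False
      then have "pop (R i) \<le> (\<Sum>j<N. pop (2 ^ j * X i j))" using Rrow pop_sum by simp
      then show ?thesis by (simp add: pop_pow2)
    qed simp
  qed
  have leS: "\<forall>j\<in>{..<N}. j * pop (S j) \<le> j * (\<Sum>i<N. ?p i j)"
  proof
    fix j assume "j \<in> {..<N}"
    show "j * pop (S j) \<le> j * (\<Sum>i<N. ?p i j)"
    proof (cases "j = 0")
      case False
      then have "pop (S j) \<le> (\<Sum>i<N. pop (X i j))" using Scol pop_sum by simp
      then show ?thesis by simp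
    qed simp
  qed
  have sR: "(\<Sum>i<N. i * pop (R i)) \<le> (\<Sum>i<N. i * (\<Sum>j<N. ?p i j))"
    using leR by (intro sum_mono) auto
  have sS: "(\<Sum>j<N. j * pop (S j)) \<le> (\<Sum>j<N. j * (\<Sum>i<N. ?p i j))"
    using leS by (intro sum_mono) auto
  have eqR: "(\<Sum>i<N. i * pop (R i)) = (\<Sum>i<N. i * (\<Sum>j<N. ?p i j))"
    and eqS: "(\<Sum>j<N. j * pop (S j)) = (\<Sum>j<N. j * (\<Sum>i<N. ?p i j))"
    using sR sS assms(5) vR vS vT W by linarith+

  have parR: "R i mod 2 = X i 0 mod 2" if "i \<in> {1..<N}" for i
  proof -
    have i1: "1 \<le> i" and iN: "i \<in> {..<N}" using that by auto
    have "i * pop (R i) = i * (\<Sum>j<N. ?p i j)"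
      by (rule sum_eq_le[OF finite_lessThan leR eqR iN])
    then have "pop (R i) = (\<Sum>j<N. ?p i j)" using i1 by simp
    then have "pop (\<Sum>j<N. 2 ^ j * X i j) = (\<Sum>j<N. pop (2 ^ j * X i j))"
      using Rrow[OF i1] by (simp add: pop_pow2)
    then have "(\<Sum>j<N. 2 ^ j * X i j) mod 2 = (\<Sum>j<N. 2 ^ j * X i j mod 2)"
      by (intro pop_sum_parity) auto
    also have "\<dots> = X i 0 mod 2 + (\<Sum>j\<in>{1..<N}. 2 ^ j * X i j mod 2)"
      using zero_split[OF N1, of "\<lambda>j. 2 ^ j * X i j mod 2"] by (simp only: power_0 mult_1)
    also have "(\<Sum>j\<in>{1..<N}. 2 ^ j * X i j mod 2) = 0"
      by (rule sum.neutral) auto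
    finally show ?thesis using Rrow[OF i1] by simp
  qed
  have parS: "S j mod 2 = (\<Sum>i<N. X i j mod 2)" if "j \<in> {1..<N}" for j
  proof -
    have j1: "1 \<le> j" and jN: "j \<in> {..<N}" using that by auto
    have "j * pop (S j) = j * (\<Sum>i<N. ?p i j)"
      by (rule sum_eq_le[OF finite_lessThan leS eqS jN])
    then have "pop (S j) = (\<Sum>i<N. ?p i j)" using j1 by simp
    then have "(\<Sum>i<N. X i j) mod 2 = (\<Sum>i<N. X i j mod 2)"
      using Scol[OF j1] by (intro pop_sum_parity) auto
    then show ?thesis using Scol[OF j1] by simp
  qed
  have parT: "?T n mod 2 = (\<Sum>i\<le>n. X i (n - i) mod 2)" if "1 \<le> n" for n
    using pop_sum_parity[of "{..n}" "\<lambda>i. X i (n - i)"] Tpop[OF that] Tdef[OF that] by simp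

  define q where "q i j = (if i = 0 \<and> j = 0 then 0 else X i j mod 2)" for i j
  have cR: "chow R = - int (\<Sum>i\<in>{1..<N}. X i 0 mod 2)"
  proof -
    have "chow R = - int (\<Sum>i\<in>{1..<N}. R i mod 2)"
    proof -
      have e: "(\<Sum>i\<in>{i. 1 \<le> i \<and> R i \<noteq> 0}. R i mod 2) = (\<Sum>i\<in>{1..<N}. R i mod 2)"
        by (rule supp_sum) (use RN in auto)
      show ?thesis by (simp only: chow_eq e)
    qed
    also have "(\<Sum>i\<in>{1..<N}. R i mod 2) = (\<Sum>i\<in>{1..<N}. X i 0 mod 2)"
      using parR by (rule sum.cong[OF refl])
    finally show ?thesis .
  qed
  have cS: "chow S = - int (\<Sum>j\<in>{1..<N}. \<Sum>i<N. X i j mod 2)"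
  proof -
    have "chow S = - int (\<Sum>j\<in>{1..<N}. S j mod 2)"
    proof -
      have e: "(\<Sum>i\<in>{i. 1 \<le> i \<and> S i \<noteq> 0}. S i mod 2) = (\<Sum>i\<in>{1..<N}. S i mod 2)"
        by (rule supp_sum) (use SN in auto)
      show ?thesis by (simp only: chow_eq e)
    qed
    also have "(\<Sum>j\<in>{1..<N}. S j mod 2) = (\<Sum>j\<in>{1..<N}. \<Sum>i<N. X i j mod 2)"
      using parS by (rule sum.cong[OF refl])
    finally show ?thesis .
  qed
  have cT: "chow ?T = - int (\<Sum>i<N. \<Sum>j<N. q i j)"
  proof -
    have "chow ?T = - int (\<Sum>n\<in>{1..<2*N}. ?T n mod 2)"
    proof -
      have e: "(\<Sum>i\<in>{i. 1 \<le> i \<and> ?T i \<noteq> 0}. ?T i mod 2) = (\<Sum>i\<in>{1..<2*N}. ?T i mod 2)"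
        by (rule supp_sum) (use TN in auto)
      show ?thesis by (simp only: chow_eq e)
    qed
    also have "(\<Sum>n\<in>{1..<2*N}. ?T n mod 2) = (\<Sum>n\<in>{1..<2*N}. \<Sum>i\<le>n. q i (n - i))"
    proof (rule sum.cong[OF refl])
      fix n assume "n \<in> {1..<2*N}"
      then have n1: "1 \<le> n" by simp
      have "(\<Sum>i\<le>n. q i (n - i)) = (\<Sum>i\<le>n. X i (n - i) mod 2)"
        by (rule sum.cong) (use n1 in \<open>auto simp: q_def\<close>)
      then show "?T n mod 2 = (\<Sum>i\<le>n. q i (n - i))" using parT[OF n1] by simp
    qed
    also have "\<dots> = (\<Sum>n<2*N. \<Sum>i\<le>n. q i (n - i))"
      using zero_split[OF N2, of "\<lambda>n. \<Sum>i\<le>n. q i (n - i)"] by (simp add: q_def)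
    also have "\<dots> = (\<Sum>i<N. \<Sum>j<N. q i j)"
    proof (rule tri_box)
      show "\<forall>i j. N \<le> i \<or> N \<le> j \<longrightarrow> q i j = 0"
        using out by (auto simp: q_def)
    qed
    finally show ?thesis .
  qed
  have box: "(\<Sum>i<N. \<Sum>j<N. q i j) = (\<Sum>i\<in>{1..<N}. X i 0 mod 2) + (\<Sum>j\<in>{1..<N}. \<Sum>i<N. X i j mod 2)"
  proof -
    have "(\<Sum>i<N. \<Sum>j<N. q i j) = (\<Sum>j<N. \<Sum>i<N. q i j)" by (rule sum.swap)
    also have "\<dots> = (\<Sum>i<N. q i 0) + (\<Sum>j\<in>{1..<N}. \<Sum>i<N. q i j)"
      by (rule zero_split[OF N1])
    also have "(\<Sum>i<N. q i 0) = (\<Sum>i\<in>{1..<N}. X i 0 mod 2)"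
      using zero_split[OF N1, of "\<lambda>i. q i 0"] by (simp add: q_def)
    also have "(\<Sum>j\<in>{1..<N}. \<Sum>i<N. q i j) = (\<Sum>j\<in>{1..<N}. \<Sum>i<N. X i j mod 2)"
      by (rule sum.cong[OF refl], rule sum.cong[OF refl]) (auto simp: q_def)
    finally show ?thesis .
  qed
  show ?thesis unfolding u_exp_def using cR cS cT box by simp
qed

end
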